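(* Let $n\le N$ and let $\boldsymbol A$ be an $n\times N$ random matrix with independent entries, each equal to $1$ with probability $p$ and to $-\tilde\sigma_p^2=-p/(1-p)$ with probability $1-p$, where $p$ is bounded away from $1$ and $n\ge C_0\log N$ for a sufficiently large constant $C_0$. Let $n_j$ be the number of entries equal to $1$ in column $j$ of $\boldsymbol A$, and define $\tilde{\boldsymbol A}$ by $\tilde A_{ij}=1$ if $A_{ij}=1$ and $\tilde A_{ij}=-n_j/(n-n_j)$ if $A_{ij}=-\tilde\sigma_p^2$. Then there are constants $c_1,c_2>0$ such that $$ \Pr\left(\|\boldsymbol A-\tilde{\boldsymbol A}\|\ge c_1\max\left\{\sqrt{\tilde\sigma_p^2N}\log N,\ (\log N)^{3/2}\right\}\right)\le c_2N^{-5}. $$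
   Context: $\|\cdot\|$ denotes the spectral norm. Parameters $n,p$ may depend on $N$; constants are independent of $N$. (If $n_j=n$ the column of $\tilde{\boldsymbol A}$ has no entries of the second type, so the definition is well posed.) *)

theory Defs
  imports "HOL-Probability.Probability"
begin

definition spec_norm :: "nat \<Rightarrow> nat \<Rightarrow> (nat \<Rightarrow> nat \<Rightarrow> real) \<Rightarrow> real" where
  "spec_norm m k M = Sup {sqrt (\<Sum>i<m. (\<Sum>j<k. M i j * x j)^2) | x. (\<Sum>j<k. (x j)^2) \<le> 1}"

text \<open>Random sign pattern: omega (i,j) = True iff entry A_ij equals 1 (probability p).\<close>
definition pattern_pmf :: "nat \<Rightarrow> nat \<Rightarrow> real \<Rightarrow> (nat \<times> nat \<Rightarrow> bool) pmf" where
  "pattern_pmf n N p = Pi_pmf ({..<n} \<times> {..<N}) False (\<lambda>_. bernoulli_pmf p)"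

definition sigma2 :: "real \<Rightarrow> real" where
  "sigma2 p = p / (1 - p)"

definition matA :: "real \<Rightarrow> (nat \<times> nat \<Rightarrow> bool) \<Rightarrow> nat \<Rightarrow> nat \<Rightarrow> real" where
  "matA p \<omega> i j = (if \<omega> (i, j) then 1 else - sigma2 p)"

definition col_count :: "nat \<Rightarrow> (nat \<times> nat \<Rightarrow> bool) \<Rightarrow> nat \<Rightarrow> nat" where
  "col_count n \<omega> j = card {i. i < n \<and> \<omega> (i, j)}"

definition matAt :: "nat \<Rightarrow> (nat \<times> nat \<Rightarrow> bool) \<Rightarrow> nat \<Rightarrow> nat \<Rightarrow> real" where
  "matAt n \<omega> i j = (if \<omega> (i, j) then 1
     else - real (col_count n \<omega> j) / (real n - real (col_count n \<omega> j)))"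

end

theory Submission
  imports Defs
begin

lemma binom_tail:
  assumes p: "0 \<le> p" "p \<le> 1"
  shows "measure_pmf.prob (binomial_pmf m p) {k. b \<le> l * real k} \<le> exp (real m * p * (exp l - 1) - b)"
proof -
  let ?S = "{k. b \<le> l * real k}"
  have "measure_pmf.prob (binomial_pmf m p) ?S = measure_pmf.prob (binomial_pmf m p) (?S \<inter> {..m})"
    by (rule measure_prob_cong_0) (use p in auto)
  also have "\<dots> = (\<Sum>k\<in>?S \<inter> {..m}. pmf (binomial_pmf m p) k)"
    by (rule measure_measure_pmf_finite) auto
  also have "\<dots> \<le> (\<Sum>k\<in>{..m}. pmf (binomial_pmf m p) k * exp (l * real k - b))"
  proof (rule sum_le_included[where i="\<lambda>k. k"])
    show "\<forall>y\<in>{..m}. 0 \<le> pmf (binomial_pmf m p) y * exp (l * real y - b)" by simp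
    show "\<forall>x\<in>?S \<inter> {..m}. \<exists>y\<in>{..m}. y = x \<and> pmf (binomial_pmf m p) x \<le> pmf (binomial_pmf m p) y * exp (l * real y - b)"
    proof
      fix x assume x: "x \<in> ?S \<inter> {..m}"
      have "1 \<le> exp (l * real x - b)" using x by simp
      hence "pmf (binomial_pmf m p) x * 1 \<le> pmf (binomial_pmf m p) x * exp (l * real x - b)"
        by (intro mult_left_mono) auto
      thus "\<exists>y\<in>{..m}. y = x \<and> pmf (binomial_pmf m p) x \<le> pmf (binomial_pmf m p) y * exp (l * real y - b)"
        using x by auto
    qed
  qed auto
  also have "\<dots> = exp (- b) * (\<Sum>k\<le>m. real (m choose k) * (p * exp l)^k * (1 - p)^(m - k))"
    using p unfolding sum_distrib_left
    by (intro sum.cong refl)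
       (simp add: exp_diff exp_minus power_mult_distrib field_simps flip: exp_of_nat_mult)
  also have "(\<Sum>k\<le>m. real (m choose k) * (p * exp l)^k * (1 - p)^(m - k)) = (p * exp l + (1 - p))^m"
    by (subst binomial_ring) (simp add: atLeast0AtMost)
  also have "\<dots> \<le> exp (p * (exp l - 1)) ^ m"
  proof (rule power_mono)
    show "p * exp l + (1 - p) \<le> exp (p * (exp l - 1))"
      using exp_ge_add_one_self[of "p * (exp l - 1)"] by (simp add: algebra_simps)
    show "0 \<le> p * exp l + (1 - p)" using p by simp
  qed
  also have "exp (p * (exp l - 1)) ^ m = exp (real m * p * (exp l - 1))"
    by (simp flip: exp_of_nat_mult add: mult.assoc)
  finally have "measure_pmf.prob (binomial_pmf m p) ?S \<le> exp (- b) * exp (real m * p * (exp l - 1))"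
    by simp
  also have "\<dots> = exp (real m * p * (exp l - 1) - b)"
    by (simp flip: exp_add)
  finally show ?thesis .
qed

lemma upper_tail:
  assumes p: "0 \<le> p" "p \<le> 1" and mu: "real m * p > 0" and t: "t \<ge> 0"
  shows "measure_pmf.prob (binomial_pmf m p) {k. real m * p + t \<le> real k}
           \<le> exp (- min (t\<^sup>2 / (4 * (real m * p))) (t / 2))"
proof (cases "t \<le> 2 * (real m * p)")
  case True
  define \<mu> where "\<mu> = real m * p"
  define l where "l = t / (2 * \<mu>)"
  have l0: "0 \<le> l" and l1: "l \<le> 1" using True mu t by (auto simp: l_def \<mu>_def field_simps)
  have "{k. real m * p + t \<le> real k} \<subseteq> {k. l * (real m * p + t) \<le> l * real k}"
    using l0 by (auto intro: mult_left_mono)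
  hence "measure_pmf.prob (binomial_pmf m p) {k. real m * p + t \<le> real k}
      \<le> measure_pmf.prob (binomial_pmf m p) {k. l * (real m * p + t) \<le> l * real k}"
    by (intro measure_pmf.finite_measure_mono) auto
  also have "\<dots> \<le> exp (real m * p * (exp l - 1) - l * (real m * p + t))"
    by (rule binom_tail[OF p])
  also have "\<dots> \<le> exp (\<mu> * l\<^sup>2 - l * t)"
  proof -
    have "exp l - 1 \<le> l + l\<^sup>2" using exp_bound[OF l0 l1] by simp
    hence "\<mu> * (exp l - 1) \<le> \<mu> * (l + l\<^sup>2)" using mu by (intro mult_left_mono) (auto simp: \<mu>_def)
    thus ?thesis by (simp add: \<mu>_def algebra_simps)
  qed
  also have "\<mu> * l\<^sup>2 - l * t = - (t\<^sup>2 / (4 * \<mu>))"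
    using mu by (simp add: l_def \<mu>_def field_simps power2_eq_square)
  also have "exp (- (t\<^sup>2 / (4 * \<mu>))) \<le> exp (- min (t\<^sup>2 / (4 * (real m * p))) (t / 2))"
    by (simp add: \<mu>_def)
  finally show ?thesis .
next
  case False
  have "measure_pmf.prob (binomial_pmf m p) {k. real m * p + t \<le> real k}
      = measure_pmf.prob (binomial_pmf m p) {k. 1 * (real m * p + t) \<le> 1 * real k}" by simp
  also have "\<dots> \<le> exp (real m * p * (exp 1 - 1) - 1 * (real m * p + t))"
    by (rule binom_tail[OF p])
  also have "\<dots> \<le> exp (- (t / 2))"
  proof -
    have "exp (1::real) \<le> 3" using exp_le by simp
    hence "real m * p * (exp 1 - 1) \<le> real m * p * 2" using mu by (intro mult_left_mono) auto
    thus ?thesis using False by simp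
  qed
  also have "\<dots> \<le> exp (- min (t\<^sup>2 / (4 * (real m * p))) (t / 2))" by simp
  finally show ?thesis .
qed

lemma lower_tail:
  assumes p: "0 \<le> p" "p \<le> 1" and mu: "real m * p > 0" and t: "t \<ge> 0"
  shows "measure_pmf.prob (binomial_pmf m p) {k. real k \<le> real m * p - t}
           \<le> exp (- (t\<^sup>2 / (4 * (real m * p))))"
proof -
  define \<mu> where "\<mu> = real m * p"
  define l where "l = t / (2 * \<mu>)"
  have l0: "0 \<le> l" using mu t by (auto simp: l_def \<mu>_def)
  have "{k. real k \<le> real m * p - t} \<subseteq> {k. (- l) * (real m * p - t) \<le> (- l) * real k}"
    using l0 by (auto intro: mult_left_mono)
  hence "measure_pmf.prob (binomial_pmf m p) {k. real k \<le> real m * p - t}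
      \<le> measure_pmf.prob (binomial_pmf m p) {k. (- l) * (real m * p - t) \<le> (- l) * real k}"
    by (intro measure_pmf.finite_measure_mono) auto
  also have "\<dots> \<le> exp (real m * p * (exp (- l) - 1) - (- l) * (real m * p - t))"
    by (rule binom_tail[OF p])
  also have "\<dots> \<le> exp (\<mu> * l\<^sup>2 - l * t)"
  proof -
    have "1 + l \<le> exp l" by (rule exp_ge_add_one_self)
    hence "exp (- l) \<le> 1 / (1 + l)" using l0 by (simp add: exp_minus field_simps)
    also have "\<dots> \<le> 1 - l + l\<^sup>2" using l0 by (simp add: field_simps power2_eq_square)
    finally have "exp (- l) - 1 \<le> - l + l\<^sup>2" by simp
    hence "\<mu> * (exp (- l) - 1) \<le> \<mu> * (- l + l\<^sup>2)" using mu by (intro mult_left_mono) (auto simp: \<mu>_def)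
    thus ?thesis by (simp add: \<mu>_def algebra_simps)
  qed
  also have "\<mu> * l\<^sup>2 - l * t = - (t\<^sup>2 / (4 * \<mu>))"
    using mu by (simp add: l_def \<mu>_def field_simps power2_eq_square)
  finally show ?thesis by (simp add: \<mu>_def)
qed

lemma spec_le_frob:
  "spec_norm m k M \<le> sqrt (\<Sum>i<m. \<Sum>j<k. (M i j)\<^sup>2)"
  unfolding spec_norm_def
proof (rule cSup_least)
  show "{sqrt (\<Sum>i<m. (\<Sum>j<k. M i j * x j)\<^sup>2) |x. (\<Sum>j<k. (x j)\<^sup>2) \<le> 1} \<noteq> {}"
  proof -
    have "sqrt (\<Sum>i<m. (\<Sum>j<k. M i j * (\<lambda>_. 0::real) j)\<^sup>2) \<in> {sqrt (\<Sum>i<m. (\<Sum>j<k. M i j * x j)\<^sup>2) |x. (\<Sum>j<k. (x j)\<^sup>2) \<le> 1}"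
      by (rule CollectI, rule exI[of _ "\<lambda>_. 0"]) simp
    thus ?thesis by blast
  qed
next
  fix y assume "y \<in> {sqrt (\<Sum>i<m. (\<Sum>j<k. M i j * x j)\<^sup>2) |x. (\<Sum>j<k. (x j)\<^sup>2) \<le> 1}"
  then obtain x where y: "y = sqrt (\<Sum>i<m. (\<Sum>j<k. M i j * x j)\<^sup>2)" and x: "(\<Sum>j<k. (x j)\<^sup>2) \<le> 1"
    by blast
  have "(\<Sum>i<m. (\<Sum>j<k. M i j * x j)\<^sup>2) \<le> (\<Sum>i<m. \<Sum>j<k. (M i j)\<^sup>2)"
  proof (rule sum_mono)
    fix i
    have "(\<Sum>j<k. M i j * x j)\<^sup>2 \<le> (\<Sum>j<k. (M i j)\<^sup>2) * (\<Sum>j<k. (x j)\<^sup>2)"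
      by (rule Cauchy_Schwarz_ineq_sum)
    also have "\<dots> \<le> (\<Sum>j<k. (M i j)\<^sup>2) * 1"
      using x by (intro mult_left_mono) (auto intro: sum_nonneg)
    finally show "(\<Sum>j<k. M i j * x j)\<^sup>2 \<le> (\<Sum>j<k. (M i j)\<^sup>2)" by simp
  qed
  thus "y \<le> sqrt (\<Sum>i<m. \<Sum>j<k. (M i j)\<^sup>2)" using y by simp
qed

lemma col_dist:
  assumes "j < N" "0 \<le> p" "p \<le> 1"
  shows "map_pmf (\<lambda>\<omega>. col_count n \<omega> j) (pattern_pmf n N p) = binomial_pmf n p"
proof -
  let ?A' = "{..<n} \<times> {j}" and ?A = "{..<n} \<times> {..<N}"
  have cardA': "card ?A' = n" by (simp add: card_cartesian_product)
  have "binomial_pmf n p = map_pmf (\<lambda>f. card {x\<in>?A'. f x}) (Pi_pmf ?A' False (\<lambda>_. bernoulli_pmf p))"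
    by (rule binomial_pmf_altdef') (use assms cardA' in auto)
  also have "Pi_pmf ?A' False (\<lambda>_. bernoulli_pmf p)
      = map_pmf (\<lambda>f x. if x \<in> ?A' then f x else False) (Pi_pmf ?A False (\<lambda>_. bernoulli_pmf p))"
    by (rule Pi_pmf_subset) (use assms in auto)
  also have "map_pmf (\<lambda>f. card {x\<in>?A'. f x}) \<dots> = map_pmf (\<lambda>\<omega>. col_count n \<omega> j) (pattern_pmf n N p)"
    unfolding map_pmf_comp pattern_pmf_def
  proof (intro map_pmf_cong refl)
    fix \<omega> :: "nat \<times> nat \<Rightarrow> bool"
    have "{x \<in> ?A'. if x \<in> ?A' then \<omega> x else False} = (\<lambda>i. (i, j)) ` {i. i < n \<and> \<omega> (i, j)}"
      by auto
    also have "card \<dots> = card {i. i < n \<and> \<omega> (i, j)}"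
      by (rule card_image) (auto simp: inj_on_def)
    finally show "card {x \<in> ?A'. if x \<in> ?A' then \<omega> x else False} = col_count n \<omega> j"
      by (simp add: col_count_def)
  qed
  finally show ?thesis ..
qed

lemma total_dist:
  assumes "0 \<le> p" "p \<le> 1"
  shows "map_pmf (\<lambda>\<omega>. card {x\<in>{..<n} \<times> {..<N}. \<omega> x}) (pattern_pmf n N p) = binomial_pmf (n * N) p"
  unfolding pattern_pmf_def
  by (rule binomial_pmf_altdef'[symmetric]) (use assms in \<open>auto simp: card_cartesian_product\<close>)

lemma sum_col:
  "(\<Sum>j<N. real (col_count n \<omega> j)) = real (card {x\<in>{..<n} \<times> {..<N}. \<omega> x})"
proof -
  have c: "real (card {x\<in>B. P x}) = (\<Sum>x\<in>B. if P x then 1 else 0)" if "finite B" for B and P :: "'a \<Rightarrow> bool"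
    using that by (simp add: sum.If_cases Int_def)
  have "(\<Sum>j<N. real (col_count n \<omega> j)) = (\<Sum>j<N. \<Sum>i<n. if \<omega> (i, j) then 1 else 0)"
    unfolding col_count_def
    by (intro sum.cong refl) (subst c[symmetric]; simp add: lessThan_def conj_commute)
  also have "\<dots> = (\<Sum>i<n. \<Sum>j<N. if \<omega> (i, j) then 1 else 0)" by (rule sum.swap)
  also have "\<dots> = (\<Sum>x\<in>{..<n} \<times> {..<N}. if \<omega> x then 1 else 0)"
    by (simp add: sum.cartesian_product)
  also have "\<dots> = real (card {x\<in>{..<n} \<times> {..<N}. \<omega> x})" by (subst c) auto
  finally show ?thesis .
qed

lemma ln2_ge_half: "ln (2::real) \<ge> 1/2"
proof -
  have "exp (1/2::real) \<le> 1 + 1/2 + (1/2)\<^sup>2" by (rule exp_bound) auto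
  hence "exp (1/2::real) \<le> 2" by (simp add: power2_eq_square)
  thus ?thesis by (subst ln_ge_iff) auto
qed

lemma det_bound:
  fixes n N :: nat and p L q :: real
  defines "L \<equiv> ln (real N)" and "q \<equiv> 1 - p"
  assumes N2: "2 \<le> N" and n1: "1 \<le> n" and p: "0 < p" "p < 1"
  and a: "\<forall>j<N. real (col_count n \<omega> j) < real n * p + real n * q / 2"
  and b: "\<forall>j<N. \<bar>real (col_count n \<omega> j) - real n * p\<bar> < 12 * (sqrt (real n * p * L) + L)"
  and d: "real (card {x\<in>{..<n} \<times> {..<N}. \<omega> x}) < 2 * (real (n * N) * p) + 12 * L"
  shows "spec_norm n N (\<lambda>i j. matA p \<omega> i j - matAt n \<omega> i j)
     \<le> 84 / q\<^sup>2 * max (sqrt (sigma2 p * real N) * L) (L powr (3/2))"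
proof -
  define c where "c j = real (col_count n \<omega> j)" for j
  define D where "D i j = matA p \<omega> i j - matAt n \<omega> i j" for i j
  define t where "t = 12 * (sqrt (real n * p * L) + L)"
  have q: "0 < q" "q \<le> 1" using p by (auto simp: q_def)
  have L: "L \<ge> 1/2"
  proof -
    have "ln (2::real) \<le> ln (real N)" using N2 by (subst ln_le_cancel_iff) auto
    thus ?thesis using ln2_ge_half by (simp add: L_def)
  qed
  have nq: "real n * q / 2 > 0" using n1 q by auto
  have entry: "(D i j)\<^sup>2 \<le> 4 * (c j - real n * p)\<^sup>2 / (real n ^ 2 * q ^ 4)" if j: "j < N" for i j
  proof (cases "\<omega> (i, j)")
    case True
    thus ?thesis by (simp add: D_def matA_def matAt_def)
  next
    case False
    have cj: "c j < real n * p + real n * q / 2" using a j by (simp add: c_def)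
    have gap: "real n - c j > real n * q / 2" proof -
      have "real n * q = real n - real n * p" by (simp add: q_def right_diff_distrib)
      thus ?thesis using cj by linarith
    qed
    have "D i j = c j / (real n - c j) - p / q"
      using False by (simp add: D_def matA_def matAt_def sigma2_def c_def q_def)
    also have "\<dots> = (c j - real n * p) / ((real n - c j) * q)"
      using gap nq q by (simp add: field_simps q_def)
    finally have De: "(D i j)\<^sup>2 = (c j - real n * p)\<^sup>2 / ((real n - c j)\<^sup>2 * q\<^sup>2)"
      by (simp add: power_divide power_mult_distrib)
    have le: "(real n * q / 2)\<^sup>2 * q\<^sup>2 \<le> (real n - c j)\<^sup>2 * q\<^sup>2"
      using gap nq by (intro mult_right_mono power_mono) auto
    have pos: "0 < (real n * q / 2)\<^sup>2 * q\<^sup>2" using nq q n1 by (intro mult_pos_pos) (auto intro: zero_less_power)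
    have "(c j - real n * p)\<^sup>2 / ((real n - c j)\<^sup>2 * q\<^sup>2) \<le> (c j - real n * p)\<^sup>2 / ((real n * q / 2)\<^sup>2 * q\<^sup>2)"
      by (rule divide_left_mono[OF le]) (use pos le in auto)
    also have "\<dots> = 4 * (c j - real n * p)\<^sup>2 / (real n ^ 2 * q ^ 4)"
      by (simp add: power2_eq_square field_simps power4_eq_xxxx)
    finally show ?thesis using De by simp
  qed
  define S where "S = (\<Sum>j<N. (c j - real n * p)\<^sup>2)"
  have frob: "(\<Sum>i<n. \<Sum>j<N. (D i j)\<^sup>2) \<le> 4 * S / (real n * q ^ 4)"
  proof -
    have "(\<Sum>i<n. \<Sum>j<N. (D i j)\<^sup>2) \<le> (\<Sum>i<n. \<Sum>j<N. 4 * (c j - real n * p)\<^sup>2 / (real n ^ 2 * q ^ 4))"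
      by (intro sum_mono entry) auto
    also have "\<dots> = real n * (4 * S / (real n ^ 2 * q ^ 4))"
      by (simp add: S_def sum_divide_distrib sum_distrib_left)
    also have "\<dots> = 4 * S / (real n * q ^ 4)"
      using n1 by (simp add: power2_eq_square field_simps)
    finally show ?thesis .
  qed
  have Sb: "S \<le> 576 * real N * real n * p * L + 288 * L\<^sup>2"
  proof (cases "real n * p \<ge> L")
    case True
    have "L\<^sup>2 \<le> real n * p * L" using True L by (simp add: power2_eq_square mult_right_mono)
    hence "L \<le> sqrt (real n * p * L)" using L by (simp add: real_le_rsqrt)
    hence t1: "t \<le> 24 * sqrt (real n * p * L)" by (simp add: t_def)
    have "t\<^sup>2 \<le> (24 * sqrt (real n * p * L))\<^sup>2"
      using t1 L by (intro power_mono) (auto simp: t_def)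
    also have "\<dots> = 576 * (real n * p * L)" using p L by (simp add: power_mult_distrib)
    finally have t2: "t\<^sup>2 \<le> 576 * (real n * p * L)" .
    have "S \<le> (\<Sum>j<N. 576 * (real n * p * L))"
      unfolding S_def
    proof (intro sum_mono)
      fix j assume "j \<in> {..<N}"
      hence "\<bar>c j - real n * p\<bar> < t" using b by (simp add: c_def t_def)
      hence "(c j - real n * p)\<^sup>2 \<le> t\<^sup>2" by (metis abs_le_square_iff abs_of_nonneg abs_ge_zero less_imp_le order_trans abs_idempotent order.strict_implies_order)
      thus "(c j - real n * p)\<^sup>2 \<le> 576 * (real n * p * L)" using t2 by linarith
    qed
    also have "\<dots> = 576 * real N * real n * p * L" by simp
    finally show ?thesis using zero_le_power2[of L] by linarith
  next
    case False
    have "real n * p * L < L * L" using False L by (intro mult_strict_right_mono) auto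
    hence "sqrt (real n * p * L) < sqrt (L * L)" by (rule real_sqrt_less_mono)
    hence "sqrt (real n * p * L) < L" using L by simp
    hence t1: "t \<le> 24 * L" by (simp add: t_def)
    have "S \<le> (\<Sum>j<N. 24 * L * (c j + real n * p))"
      unfolding S_def
    proof (intro sum_mono)
      fix j assume "j \<in> {..<N}"
      hence "\<bar>c j - real n * p\<bar> < t" using b by (simp add: c_def t_def)
      hence lt: "\<bar>c j - real n * p\<bar> \<le> 24 * L" using t1 by linarith
      have cp: "\<bar>c j - real n * p\<bar> \<le> c j + real n * p" using p by (auto simp: c_def abs_if)
      have "(c j - real n * p)\<^sup>2 = \<bar>c j - real n * p\<bar> * \<bar>c j - real n * p\<bar>"
        by (simp add: power2_eq_square abs_mult[symmetric])
      also have "\<dots> \<le> (24 * L) * (c j + real n * p)"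
        using lt cp by (intro mult_mono) auto
      finally show "(c j - real n * p)\<^sup>2 \<le> 24 * L * (c j + real n * p)" by simp
    qed
    also have "\<dots> = 24 * L * ((\<Sum>j<N. c j) + real N * real n * p)"
      by (subst sum_distrib_left[symmetric]) (simp add: sum.distrib)
    also have "(\<Sum>j<N. c j) = real (card {x\<in>{..<n} \<times> {..<N}. \<omega> x})"
      unfolding c_def by (rule sum_col)
    also have "24 * L * (real (card {x\<in>{..<n} \<times> {..<N}. \<omega> x}) + real N * real n * p)
        \<le> 24 * L * ((2 * (real (n * N) * p) + 12 * L) + real N * real n * p)"
      using d L by (intro mult_left_mono add_right_mono) auto
    also have "\<dots> = 72 * real N * real n * p * L + 288 * L\<^sup>2"
      by (simp add: algebra_simps power2_eq_square)
    finally have "S \<le> 72 * real N * real n * p * L + 288 * L\<^sup>2" .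
    moreover have "0 \<le> real N * real n * p * L" using p L by simp
    ultimately show ?thesis by linarith
  qed
  define M where "M = max (sqrt (sigma2 p * real N) * L) (L powr (3/2))"
  have sig: "p \<le> sigma2 p" using p q by (simp add: sigma2_def q_def field_simps)
  have s0: "sigma2 p \<ge> 0" using p sig by linarith
  have aM: "sigma2 p * real N * L\<^sup>2 \<le> M\<^sup>2"
  proof -
    have e: "(sqrt (sigma2 p * real N) * L)\<^sup>2 = sigma2 p * real N * L\<^sup>2"
      unfolding power_mult_distrib using s0 by (subst real_sqrt_pow2) auto
    have "0 \<le> sqrt (sigma2 p * real N) * L" using L s0 by simp
    moreover have "sqrt (sigma2 p * real N) * L \<le> M" unfolding M_def by (rule max.cobounded1)
    ultimately have "(sqrt (sigma2 p * real N) * L)\<^sup>2 \<le> M\<^sup>2" by (meson power_mono)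
    thus ?thesis using e by simp
  qed
  have bM: "L ^ 3 \<le> M\<^sup>2"
  proof -
    have e: "(L powr (3/2))\<^sup>2 = L ^ 3"
    proof -
      have "(L powr (3/2))\<^sup>2 = L powr (3/2) * L powr (3/2)" by (simp add: power2_eq_square)
      also have "\<dots> = L powr 3" by (simp flip: powr_add)
      also have "\<dots> = L ^ 3" using L by (simp add: powr_realpow)
      finally show ?thesis .
    qed
    have "0 \<le> L powr (3/2)" by simp
    moreover have "L powr (3/2) \<le> M" unfolding M_def by (rule max.cobounded2)
    ultimately have "(L powr (3/2))\<^sup>2 \<le> M\<^sup>2" by (meson power_mono)
    thus ?thesis using e by simp
  qed
  have M0: "M \<ge> 0" unfolding M_def by (rule order_trans[OF _ max.cobounded2]) simp
  have "(\<Sum>i<n. \<Sum>j<N. (D i j)\<^sup>2) \<le> 4 * (576 * real N * real n * p * L + 288 * L\<^sup>2) / (real n * q ^ 4)"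
  proof -
    have "4 * S \<le> 4 * (576 * real N * real n * p * L + 288 * L\<^sup>2)" using Sb by simp
    hence "4 * S / (real n * q ^ 4) \<le> 4 * (576 * real N * real n * p * L + 288 * L\<^sup>2) / (real n * q ^ 4)"
      using q by (intro divide_right_mono) auto
    thus ?thesis using frob by linarith
  qed
  also have "\<dots> = (2304 * real N * p * L + 1152 * L\<^sup>2 / real n) / q ^ 4"
    using n1 by (simp add: field_simps)
  also have "\<dots> \<le> (2304 * real N * p * L + 1152 * L\<^sup>2) / q ^ 4"
  proof -
    have "L\<^sup>2 / real n \<le> L\<^sup>2" using n1 by (simp add: divide_le_eq mult_le_cancel_left1 mult_le_cancel_right1) 
    thus ?thesis using q by (intro divide_right_mono) auto
  qed
  also have "\<dots> \<le> (4608 * (sigma2 p * real N * L\<^sup>2) + 2304 * L ^ 3) / q ^ 4"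
  proof -
    have "real N * p * L \<le> 2 * (sigma2 p * real N * L\<^sup>2)"
    proof -
      have "real N * p * L \<le> real N * p * (2 * L\<^sup>2)"
        using L p by (intro mult_left_mono) (auto simp: power2_eq_square)
      also have "\<dots> \<le> real N * sigma2 p * (2 * L\<^sup>2)"
        using sig by (intro mult_right_mono mult_left_mono) auto
      finally show ?thesis by (simp add: algebra_simps)
    qed
    moreover have "L\<^sup>2 \<le> 2 * L ^ 3" using L by (simp add: power2_eq_square power3_eq_cube mult_right_mono)
    ultimately show ?thesis using q by (intro divide_right_mono) auto
  qed
  also have "\<dots> \<le> 6912 * M\<^sup>2 / q ^ 4"
    using aM bM q by (intro divide_right_mono) auto
  also have "\<dots> = (84 / q\<^sup>2 * M)\<^sup>2 * (6912 / 7056)"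
    by (simp add: power2_eq_square field_simps power4_eq_xxxx)
  also have "\<dots> \<le> (84 / q\<^sup>2 * M)\<^sup>2" by simp
  finally have "sqrt (\<Sum>i<n. \<Sum>j<N. (D i j)\<^sup>2) \<le> 84 / q\<^sup>2 * M"
    using M0 q by (simp add: real_sqrt_le_iff real_le_lsqrt)
  hence "spec_norm n N D \<le> 84 / q\<^sup>2 * M" using spec_le_frob[of n N D] by linarith
  thus ?thesis by (simp add: D_def[abs_def] M_def)
qed

lemma col_prob:
  assumes "j < N" "0 \<le> p" "p \<le> 1"
  shows "measure_pmf.prob (pattern_pmf n N p) {\<omega>. P (real (col_count n \<omega> j))}
       = measure_pmf.prob (binomial_pmf n p) {k. P (real k)}"
proof -
  have "measure_pmf.prob (pattern_pmf n N p) {\<omega>. P (real (col_count n \<omega> j))}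
     = measure_pmf.prob (map_pmf (\<lambda>\<omega>. col_count n \<omega> j) (pattern_pmf n N p)) {k. P (real k)}"
    by (simp add: vimage_def)
  also have "\<dots> = measure_pmf.prob (binomial_pmf n p) {k. P (real k)}"
    using col_dist[OF assms] by simp
  finally show ?thesis .
qed

lemma total_prob:
  assumes "0 \<le> p" "p \<le> 1"
  shows "measure_pmf.prob (pattern_pmf n N p) {\<omega>. P (real (card {x\<in>{..<n} \<times> {..<N}. \<omega> x}))}
       = measure_pmf.prob (binomial_pmf (n * N) p) {k. P (real k)}"
proof -
  have "measure_pmf.prob (pattern_pmf n N p) {\<omega>. P (real (card {x\<in>{..<n} \<times> {..<N}. \<omega> x}))}
     = measure_pmf.prob (map_pmf (\<lambda>\<omega>. card {x\<in>{..<n} \<times> {..<N}. \<omega> x}) (pattern_pmf n N p)) {k. P (real k)}"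
    by (simp add: vimage_def)
  also have "\<dots> = measure_pmf.prob (binomial_pmf (n * N) p) {k. P (real k)}"
    using total_dist[OF assms] by simp
  finally show ?thesis .
qed

theorem lemma5:
  fixes p0 :: real
  assumes "p0 < 1"
  shows "\<exists>C0. \<exists>c1 c2. c1 > 0 \<and> c2 > 0 \<and>
    (\<forall>N n :: nat. \<forall>p :: real.
       1 \<le> N \<longrightarrow> n \<le> N \<longrightarrow> 0 < p \<longrightarrow> p \<le> p0 \<longrightarrow> real n \<ge> C0 * ln (real N) \<longrightarrow>
       measure_pmf.prob (pattern_pmf n N p)
         {\<omega>. spec_norm n N (\<lambda>i j. matA p \<omega> i j - matAt n \<omega> i j)
               \<ge> c1 * max (sqrt (sigma2 p * real N) * ln (real N)) (ln (real N) powr (3/2))}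
       \<le> c2 * real N powr (-5))"
proof -
  define q0 where "q0 = 1 - p0"
  have q0: "q0 > 0" using assms by (simp add: q0_def)
  define C0 where "C0 = 96 / q0\<^sup>2"
  define c1 where "c1 = 100 / q0\<^sup>2"
  have main: "measure_pmf.prob (pattern_pmf n N p)
         {\<omega>. spec_norm n N (\<lambda>i j. matA p \<omega> i j - matAt n \<omega> i j)
               \<ge> c1 * max (sqrt (sigma2 p * real N) * ln (real N)) (ln (real N) powr (3/2))}
       \<le> 4 * real N powr (-5)"
    if N1: "1 \<le> N" and nN: "n \<le> N" and p0: "0 < p" and pp0: "p \<le> p0" and nC: "real n \<ge> C0 * ln (real N)"
    for N n :: nat and p :: real
  proof (cases "N = 1")
    case True
    have "measure_pmf.prob (pattern_pmf n N p) {\<omega>. spec_norm n N (\<lambda>i j. matA p \<omega> i j - matAt n \<omega> i j)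
               \<ge> c1 * max (sqrt (sigma2 p * real N) * ln (real N)) (ln (real N) powr (3/2))} \<le> 1"
      by simp
    also have "\<dots> \<le> 4 * real N powr (-5)" using True by simp
    finally show ?thesis .
  next
    case False
    hence N2: "N \<ge> 2" using N1 by simp
    define L where "L = ln (real N)"
    define q where "q = 1 - p"
    define P where "P = measure_pmf.prob (pattern_pmf n N p)"
    define T where "T \<omega> = real (card {x\<in>{..<n} \<times> {..<N}. \<omega> x})" for \<omega>
    define cc where "cc \<omega> j = real (col_count n \<omega> j)" for \<omega> j
    define t where "t = 12 * (sqrt (real n * p * L) + L)"
    define M where "M = max (sqrt (sigma2 p * real N) * L) (L powr (3/2))"
    have p1: "p < 1" using pp0 assms by simp
    have qq0: "q0 \<le> q" using pp0 by (simp add: q_def q0_def)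
    have q: "0 < q" "q \<le> 1" using p0 p1 by (auto simp: q_def)
    have L: "L \<ge> 1/2"
    proof -
      have "ln (2::real) \<le> ln (real N)" using N2 by (subst ln_le_cancel_iff) auto
      thus ?thesis using ln2_ge_half by (simp add: L_def)
    qed
    have nL: "real n \<ge> 96 / q0\<^sup>2 * L" using nC by (simp add: C0_def L_def)
    have nq0: "real n * q0\<^sup>2 \<ge> 96 * L"
      using nL q0 by (simp add: field_simps)
    have n1: "1 \<le> n"
    proof -
      have "0 < 96 * L" using L by simp
      hence "real n > 0" using nq0 by (smt (verit) mult_nonneg_nonneg of_nat_0_le_iff zero_le_power2 mult_eq_0_iff)
      thus ?thesis by simp
    qed
    have mu: "real n * p > 0" using n1 p0 by simp
    have M0: "M > 0"
    proof -
      have "0 < L powr (3/2)" using L by simp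
      also have "\<dots> \<le> M" unfolding M_def by (rule max.cobounded2)
      finally show ?thesis .
    qed
    have e6: "exp (- x) \<le> real N powr (-6)" if "x \<ge> 6 * L" for x
    proof -
      have "exp (- x) \<le> exp (- (6 * L))" using that by simp
      also have "\<dots> = real N powr (-6)" using N2 by (simp add: L_def powr_def)
      finally show ?thesis .
    qed
    define Ea where "Ea j = {\<omega>. real n * p + real n * q / 2 \<le> cc \<omega> j}" for j
    define Eb where "Eb j = {\<omega>. real n * p + t \<le> cc \<omega> j}" for j
    define Ec where "Ec j = {\<omega>. cc \<omega> j \<le> real n * p - t}" for j
    define Ed where "Ed = {\<omega>. real (n * N) * p + (real (n * N) * p + 12 * L) \<le> T \<omega>}"
    have Pa: "P (Ea j) \<le> real N powr (-6)" if j: "j < N" for j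
    proof -
      have "P (Ea j) = measure_pmf.prob (binomial_pmf n p) {k. real n * p + real n * q / 2 \<le> real k}"
        unfolding P_def Ea_def cc_def by (rule col_prob) (use j p0 p1 in auto)
      also have "\<dots> \<le> exp (- min ((real n * q / 2)\<^sup>2 / (4 * (real n * p))) (real n * q / 2 / 2))"
        by (rule upper_tail) (use p0 p1 mu q in auto)
      also have "\<dots> \<le> real N powr (-6)"
      proof (rule e6)
        have A: "real n * q0\<^sup>2 \<le> real n * q\<^sup>2"
          using qq0 q0 by (intro mult_left_mono power_mono) auto
        have "(real n * q / 2)\<^sup>2 / (4 * (real n * p)) = real n * q\<^sup>2 / (16 * p)"
          using n1 p0 by (simp add: power2_eq_square field_simps)
        also have "\<dots> \<ge> real n * q\<^sup>2 / 16"
          using p0 p1 n1 q by (intro divide_left_mono) auto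
        finally have B: "(real n * q / 2)\<^sup>2 / (4 * (real n * p)) \<ge> real n * q\<^sup>2 / 16" .
        have "real n * q\<^sup>2 \<le> real n * q" using q by (intro mult_left_mono) (auto simp: power2_eq_square)
        hence C: "real n * q / 2 / 2 \<ge> real n * q\<^sup>2 / 16" using q n1 by simp
        show "6 * L \<le> min ((real n * q / 2)\<^sup>2 / (4 * (real n * p))) (real n * q / 2 / 2)"
        proof -
          have D: "6 * L \<le> real n * q\<^sup>2 / 16" using A nq0 by linarith
          show ?thesis unfolding min.bounded_iff using D B C by linarith
        qed
      qed
      finally show ?thesis .
    qed
    have t0: "t \<ge> 0" using L mu by (simp add: t_def)
    have tsq: "t\<^sup>2 / (4 * (real n * p)) \<ge> 6 * L"
    proof -
      have "12 * sqrt (real n * p * L) \<le> t" using L by (simp add: t_def)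
      hence "(12 * sqrt (real n * p * L))\<^sup>2 \<le> t\<^sup>2" using L mu by (intro power_mono) auto
      hence "144 * (real n * p * L) \<le> t\<^sup>2" using L mu by (simp add: power_mult_distrib)
      hence "144 * (real n * p * L) / (4 * (real n * p)) \<le> t\<^sup>2 / (4 * (real n * p))"
        using mu by (intro divide_right_mono) auto
      moreover have "144 * (real n * p * L) / (4 * (real n * p)) = 36 * L" using mu n1 p0 by (simp add: field_simps)
      ultimately show ?thesis using L by linarith
    qed
    have Pb: "P (Eb j) \<le> real N powr (-6)" if j: "j < N" for j
    proof -
      have "P (Eb j) = measure_pmf.prob (binomial_pmf n p) {k. real n * p + t \<le> real k}"
        unfolding P_def Eb_def cc_def by (rule col_prob) (use j p0 p1 in auto)
      also have "\<dots> \<le> exp (- min (t\<^sup>2 / (4 * (real n * p))) (t / 2))"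
        by (rule upper_tail) (use p0 p1 mu t0 in auto)
      also have "\<dots> \<le> real N powr (-6)"
        by (rule e6) (use tsq L mu in \<open>auto simp: t_def\<close>)
      finally show ?thesis .
    qed
    have Pc: "P (Ec j) \<le> real N powr (-6)" if j: "j < N" for j
    proof -
      have "P (Ec j) = measure_pmf.prob (binomial_pmf n p) {k. real k \<le> real n * p - t}"
        unfolding P_def Ec_def cc_def by (rule col_prob) (use j p0 p1 in auto)
      also have "\<dots> \<le> exp (- (t\<^sup>2 / (4 * (real n * p))))"
        by (rule lower_tail) (use p0 p1 mu t0 in auto)
      also have "\<dots> \<le> real N powr (-6)"
        by (rule e6) (use tsq in auto)
      finally show ?thesis .
    qed
    have Pd: "P Ed \<le> real N powr (-6)"
    proof -
      define \<mu> where "\<mu> = real (n * N) * p"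
      have mu2: "\<mu> > 0" using n1 p0 N2 by (simp add: \<mu>_def)
      have "P Ed = measure_pmf.prob (binomial_pmf (n * N) p) {k. real (n * N) * p + (real (n * N) * p + 12 * L) \<le> real k}"
        unfolding P_def Ed_def T_def by (rule total_prob) (use p0 p1 in auto)
      also have "\<dots> \<le> exp (- min ((\<mu> + 12 * L)\<^sup>2 / (4 * \<mu>)) ((\<mu> + 12 * L) / 2))"
        unfolding \<mu>_def by (rule upper_tail) (use p0 p1 mu2 L in \<open>auto simp: \<mu>_def\<close>)
      also have "\<dots> \<le> real N powr (-6)"
      proof (rule e6)
        have "4 * \<mu> * (12 * L) \<le> (\<mu> + 12 * L)\<^sup>2"
          using zero_le_power2[of "\<mu> - 12 * L"] by (simp add: power2_eq_square algebra_simps)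
        hence "4 * \<mu> * (12 * L) / (4 * \<mu>) \<le> (\<mu> + 12 * L)\<^sup>2 / (4 * \<mu>)"
          using mu2 by (intro divide_right_mono) auto
        hence "12 * L \<le> (\<mu> + 12 * L)\<^sup>2 / (4 * \<mu>)" using mu2 by simp
        thus "6 * L \<le> min ((\<mu> + 12 * L)\<^sup>2 / (4 * \<mu>)) ((\<mu> + 12 * L) / 2)"
          using mu2 L by simp
      qed
      finally show ?thesis .
    qed
    have sub: "{\<omega>. spec_norm n N (\<lambda>i j. matA p \<omega> i j - matAt n \<omega> i j)
               \<ge> c1 * max (sqrt (sigma2 p * real N) * ln (real N)) (ln (real N) powr (3/2))}
       \<subseteq> (\<Union>j\<in>{..<N}. Ea j \<union> Eb j \<union> Ec j) \<union> Ed"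
    proof
      fix \<omega> assume \<omega>: "\<omega> \<in> {\<omega>. spec_norm n N (\<lambda>i j. matA p \<omega> i j - matAt n \<omega> i j)
               \<ge> c1 * max (sqrt (sigma2 p * real N) * ln (real N)) (ln (real N) powr (3/2))}"
      show "\<omega> \<in> (\<Union>j\<in>{..<N}. Ea j \<union> Eb j \<union> Ec j) \<union> Ed"
      proof (rule ccontr)
        assume nb: "\<omega> \<notin> (\<Union>j\<in>{..<N}. Ea j \<union> Eb j \<union> Ec j) \<union> Ed"
        have a: "\<forall>j<N. real (col_count n \<omega> j) < real n * p + real n * (1 - p) / 2"
          using nb by (auto simp: Ea_def cc_def q_def not_le)
        have b: "\<forall>j<N. \<bar>real (col_count n \<omega> j) - real n * p\<bar> < 12 * (sqrt (real n * p * ln (real N)) + ln (real N))"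
        proof (intro allI impI)
          fix j assume j: "j < N"
          hence "\<omega> \<notin> Eb j" "\<omega> \<notin> Ec j" using nb by auto
          thus "\<bar>real (col_count n \<omega> j) - real n * p\<bar> < 12 * (sqrt (real n * p * ln (real N)) + ln (real N))"
            unfolding Eb_def Ec_def cc_def t_def L_def by (simp add: abs_less_iff not_le)
        qed
        have d: "real (card {x\<in>{..<n} \<times> {..<N}. \<omega> x}) < 2 * (real (n * N) * p) + 12 * ln (real N)"
          using nb by (auto simp: Ed_def T_def L_def not_le mult_ac)
        have "spec_norm n N (\<lambda>i j. matA p \<omega> i j - matAt n \<omega> i j) \<le> 84 / (1 - p)\<^sup>2 * M"
          using det_bound[OF N2 n1 p0 p1 a b d] by (simp add: M_def L_def)
        also have "84 / (1 - p)\<^sup>2 * M \<le> 84 / q0\<^sup>2 * M"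
        proof -
          have "q0\<^sup>2 \<le> (1 - p)\<^sup>2" using qq0 q0 by (intro power_mono) (auto simp: q_def)
          hence "84 / (1 - p)\<^sup>2 \<le> 84 / q0\<^sup>2" using q0 p1 by (intro divide_left_mono) (auto intro!: mult_pos_pos)
          thus ?thesis using M0 by (intro mult_right_mono) auto
        qed
        also have "\<dots> < c1 * M" using M0 q0 by (simp add: c1_def divide_strict_right_mono)
        finally show False using \<omega> by (simp add: M_def L_def)
      qed
    qed
    have "P {\<omega>. spec_norm n N (\<lambda>i j. matA p \<omega> i j - matAt n \<omega> i j)
               \<ge> c1 * max (sqrt (sigma2 p * real N) * ln (real N)) (ln (real N) powr (3/2))}
        \<le> P ((\<Union>j\<in>{..<N}. Ea j \<union> Eb j \<union> Ec j) \<union> Ed)"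
      unfolding P_def by (rule measure_pmf.finite_measure_mono[OF sub]) simp
    also have "\<dots> \<le> P (\<Union>j\<in>{..<N}. Ea j \<union> Eb j \<union> Ec j) + P Ed"
      unfolding P_def by (rule measure_Un_le) auto
    also have "P (\<Union>j\<in>{..<N}. Ea j \<union> Eb j \<union> Ec j) \<le> (\<Sum>j<N. P (Ea j \<union> Eb j \<union> Ec j))"
      unfolding P_def by (rule measure_UNION_le) auto
    also have "\<dots> \<le> (\<Sum>j<N. 3 * real N powr (-6))"
    proof (rule sum_mono)
      fix j assume j: "j \<in> {..<N}"
      have "P (Ea j \<union> Eb j \<union> Ec j) \<le> P (Ea j \<union> Eb j) + P (Ec j)"
        unfolding P_def by (rule measure_Un_le) auto
      also have "\<dots> \<le> P (Ea j) + P (Eb j) + P (Ec j)"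
        using measure_Un_le[of "Ea j" "measure_pmf (pattern_pmf n N p)" "Eb j"]
        unfolding P_def by auto
      also have "\<dots> \<le> 3 * real N powr (-6)" using Pa Pb Pc j by fastforce
      finally show "P (Ea j \<union> Eb j \<union> Ec j) \<le> 3 * real N powr (-6)" .
    qed
    also have "(\<Sum>j<N. 3 * real N powr (-6)) + P Ed \<le> (3 * real N + 1) * real N powr (-6)"
      using Pd by (simp add: algebra_simps)
    also have "\<dots> \<le> 4 * real N powr (-5)"
    proof -
      have "real N * real N powr (-6) = real N powr 1 * real N powr (-6)" using N2 by simp
      also have "\<dots> = real N powr (1 + -6)" by (rule powr_add[symmetric])
      finally have "real N powr (-5) = real N * real N powr (-6)" by simp
      moreover have "(3 * real N + 1) \<le> 4 * real N" using N2 by simp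
      ultimately show ?thesis by (simp add: mult_right_mono)
    qed
    finally show ?thesis unfolding P_def by simp
  qed
  show ?thesis
    apply (rule exI[of _ C0], rule exI[of _ c1], rule exI[of _ 4])
    using main q0 by (auto simp: c1_def)
qed

end
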